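(* Let $\alpha\in(1,\infty)$, let $p_{Y\mid X}$ be a channel between finite sets $\mathcal X,\mathcal Y$, and for a distribution $p_X$ on $\mathcal X$, a joint distribution $\tilde q_{X,Y}$ on $\mathcal X\times\mathcal Y$ with $X$-marginal $\tilde q_X$, and a reverse channel $r_{X\mid Y}$, define $$\tilde F_\alpha^{\mathrm{S3}}(p_X,\tilde q_{X,Y},r_{X\mid Y}):=\frac{\alpha}{1-\alpha}D(\tilde q_{X,Y}\|\tilde q_Xp_{Y\mid X})+\mathbb E^{\tilde q_{X,Y}}\!\left[\log\frac{r_{X\mid Y}(X\mid Y)}{\tilde q_X(X)}\right]+\frac{1}{1-\alpha}D(\tilde q_X\|p_X).$$ Then: (1) for fixed $(p_X,\tilde q_{X,Y})$, $\tilde F_\alpha^{\mathrm{S3}}$ is maximized over $r_{X\mid Y}$ by $r^*_{X\mid Y}(x\mid y)=\tilde q_{X,Y}(x,y)/\sum_{x'}\tilde q_{X,Y}(x',y)$; (2) for fixed $(\tilde q_{X,Y},r_{X\mid Y})$, it is maximized over $p_X$ by $p_X^*(x)=\sum_y\tilde q_{X,Y}(x,y)$; (3) for fixed $(p_X,r_{X\mid Y})$, it is maximized over $\tilde q_{X,Y}$ by $$\tilde q^*_{X,Y}(x,y)=\frac{p_X(x)^{1/\alpha}p_{Y\mid X}(y\mid x)r_{X\mid Y}(x\mid y)^{1-1/\alpha}}{\sum_{x',y'}p_X(x')^{1/\alpha}p_{Y\mid X}(y'\mid x')r_{X\mid Y}(x'\mid y')^{1-1/\alpha}}.$$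
   Context: $\log$ is natural and $D$ is the Kullback–Leibler divergence. A reverse channel $r_{X\mid Y}$ is a family $\{r_{X\mid Y}(\cdot\mid y)\}_{y\in\mathcal Y}$ of distributions on $\mathcal X$. *)

theory Defs
  imports "HOL-Analysis.Analysis" "HOL-Library.Extended_Real"
begin

definition distr :: "('a::finite \<Rightarrow> real) \<Rightarrow> bool" where
  "distr p \<longleftrightarrow> (\<forall>a. 0 \<le> p a) \<and> (\<Sum>a\<in>UNIV. p a) = 1"

text \<open>Channel p_{Y|X}: W x y = p_{Y|X}(y|x).\<close>
definition channel :: "('x::finite \<Rightarrow> 'y::finite \<Rightarrow> real) \<Rightarrow> bool" where
  "channel W \<longleftrightarrow> (\<forall>x. distr (W x))"

text \<open>Reverse channel r_{X|Y}: r y x = r_{X|Y}(x|y).\<close>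
definition rev_channel :: "('y::finite \<Rightarrow> 'x::finite \<Rightarrow> real) \<Rightarrow> bool" where
  "rev_channel r \<longleftrightarrow> (\<forall>y. distr (r y))"

definition xmarg :: "('x::finite \<times> 'y::finite \<Rightarrow> real) \<Rightarrow> 'x \<Rightarrow> real" where
  "xmarg q x = (\<Sum>y\<in>UNIV. q (x, y))"

definition ymarg :: "('x::finite \<times> 'y::finite \<Rightarrow> real) \<Rightarrow> 'y \<Rightarrow> real" where
  "ymarg q y = (\<Sum>x\<in>UNIV. q (x, y))"

definition KL :: "('a::finite \<Rightarrow> real) \<Rightarrow> ('a \<Rightarrow> real) \<Rightarrow> ereal" where
  "KL p q = (\<Sum>a\<in>UNIV. if p a = 0 then 0
                        else if q a = 0 then \<infinity>
                        else ereal (p a * ln (p a / q a)))"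

definition exp_log_term :: "('x::finite \<times> 'y::finite \<Rightarrow> real) \<Rightarrow> ('y \<Rightarrow> 'x \<Rightarrow> real) \<Rightarrow> ereal" where
  "exp_log_term q r = (\<Sum>xy\<in>UNIV. case xy of (x, y) \<Rightarrow>
      if q (x, y) = 0 then 0
      else if r y x = 0 then -\<infinity>
      else ereal (q (x, y) * ln (r y x / xmarg q x)))"

definition F_S3 :: "real \<Rightarrow> ('x::finite \<Rightarrow> 'y::finite \<Rightarrow> real) \<Rightarrow> ('x \<Rightarrow> real)
                     \<Rightarrow> ('x \<times> 'y \<Rightarrow> real) \<Rightarrow> ('y \<Rightarrow> 'x \<Rightarrow> real) \<Rightarrow> ereal" where
  "F_S3 \<alpha> W p q r =
     ereal (\<alpha> / (1 - \<alpha>)) * KL q (\<lambda>(x, y). xmarg q x * W x y)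
     + exp_log_term q r
     + ereal (1 / (1 - \<alpha>)) * KL (xmarg q) p"

definition Z3 :: "real \<Rightarrow> ('x::finite \<Rightarrow> 'y::finite \<Rightarrow> real) \<Rightarrow> ('x \<Rightarrow> real)
                   \<Rightarrow> ('y \<Rightarrow> 'x \<Rightarrow> real) \<Rightarrow> real" where
  "Z3 \<alpha> W p r = (\<Sum>x'\<in>UNIV. \<Sum>y'\<in>UNIV.
       p x' powr (1 / \<alpha>) * W x' y' * r y' x' powr (1 - 1 / \<alpha>))"

definition q_star :: "real \<Rightarrow> ('x::finite \<Rightarrow> 'y::finite \<Rightarrow> real) \<Rightarrow> ('x \<Rightarrow> real)
                   \<Rightarrow> ('y \<Rightarrow> 'x \<Rightarrow> real) \<Rightarrow> 'x \<times> 'y \<Rightarrow> real" where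
  "q_star \<alpha> W p r = (\<lambda>(x, y).
       p x powr (1 / \<alpha>) * W x y * r y x powr (1 - 1 / \<alpha>) / Z3 \<alpha> W p r)"

end

theory Submission
  imports Defs
begin

definition KLr :: "('a::finite \<Rightarrow> real) \<Rightarrow> ('a \<Rightarrow> real) \<Rightarrow> real" where
  "KLr p q = (\<Sum>a\<in>UNIV. if p a = 0 then 0 else p a * ln (p a / q a))"

definition ELr :: "('x::finite \<times> 'y::finite \<Rightarrow> real) \<Rightarrow> ('y \<Rightarrow> 'x \<Rightarrow> real) \<Rightarrow> real" where
  "ELr q r = (\<Sum>xy\<in>UNIV. case xy of (x, y) \<Rightarrow>
      if q (x, y) = 0 then 0 else q (x, y) * ln (r y x / xmarg q x))"

lemma KL_eq: "(\<forall>a. p a \<noteq> 0 \<longrightarrow> q a \<noteq> 0) \<Longrightarrow> KL p q = ereal (KLr p q)"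
  unfolding KL_def KLr_def sum_ereal[symmetric]
  by (rule sum.cong) auto

lemma KL_inf: "p a \<noteq> 0 \<Longrightarrow> q a = 0 \<Longrightarrow> KL p q = \<infinity>"
  unfolding KL_def sum_Pinfty by (auto intro!: bexI[of _ a])

lemma ELT_eq: "(\<forall>x y. q (x, y) \<noteq> 0 \<longrightarrow> r y x \<noteq> 0) \<Longrightarrow> exp_log_term q r = ereal (ELr q r)"
  unfolding exp_log_term_def ELr_def sum_ereal[symmetric]
  by (rule sum.cong) auto

lemma sum_not_minf:
  fixes f :: "'a \<Rightarrow> ereal"
  shows "finite A \<Longrightarrow> (\<forall>i\<in>A. f i \<noteq> -\<infinity>) \<Longrightarrow> sum f A \<noteq> -\<infinity>"
proof (induction A rule: finite_induct)
  case (insert x F)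
  then show ?case by simp
qed simp

lemma sum_not_pinf:
  fixes f :: "'a \<Rightarrow> ereal"
  shows "finite A \<Longrightarrow> (\<forall>i\<in>A. f i \<noteq> \<infinity>) \<Longrightarrow> sum f A \<noteq> \<infinity>"
  by (simp add: sum_Pinfty)

lemma sum_minf:
  fixes f :: "'a \<Rightarrow> ereal"
  assumes "finite A" "\<forall>i\<in>A. f i \<noteq> \<infinity>" "i \<in> A" "f i = -\<infinity>"
  shows "sum f A = -\<infinity>"
proof -
  have "sum f A = f i + sum f (A - {i})" using assms(1,3) by (rule sum.remove)
  moreover have "sum f (A - {i}) \<noteq> \<infinity>" using assms by (intro sum_not_pinf) auto
  ultimately show ?thesis using assms(4) by simp
qed

lemma ELT_minf: "q (x, y) \<noteq> 0 \<Longrightarrow> r y x = 0 \<Longrightarrow> exp_log_term q r = -\<infinity>"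
  unfolding exp_log_term_def
  by (rule sum_minf[where i="(x,y)"]) auto

lemma ELT_not_pinf: "exp_log_term q r \<noteq> \<infinity>"
  unfolding exp_log_term_def by (rule sum_not_pinf) auto

lemma KL_not_minf: "KL p q \<noteq> -\<infinity>"
  unfolding KL_def by (rule sum_not_minf) auto

lemma neg_mult_not_pinf: "c < 0 \<Longrightarrow> x \<noteq> -\<infinity> \<Longrightarrow> ereal c * x \<noteq> \<infinity>"
  by (cases x) auto

lemma xmarg_ge: "(\<forall>z. 0 \<le> q z) \<Longrightarrow> q (x, y) \<le> xmarg q x"
  unfolding xmarg_def by (rule member_le_sum[where f="\<lambda>y. q (x,y)", simplified]) auto

lemma xmarg_zero: "(\<forall>z. 0 \<le> q z) \<Longrightarrow> xmarg q x \<noteq> 0 \<Longrightarrow> \<exists>y. q (x, y) \<noteq> 0"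
  unfolding xmarg_def by (metis (mono_tags, lifting) sum.neutral)

definition good where
  "good W p q r \<longleftrightarrow> (\<forall>x y. q (x, y) \<noteq> 0 \<longrightarrow> W x y \<noteq> 0 \<and> r y x \<noteq> 0 \<and> p x \<noteq> 0)"

lemma F_good:
  assumes "\<forall>z. 0 \<le> q z" "good W p q r"
  shows "F_S3 \<alpha> W p q r = ereal (\<alpha> / (1 - \<alpha>) * KLr q (\<lambda>(x, y). xmarg q x * W x y)
      + ELr q r + 1 / (1 - \<alpha>) * KLr (xmarg q) p)"
proof -
  have "KL q (\<lambda>(x, y). xmarg q x * W x y) = ereal (KLr q (\<lambda>(x, y). xmarg q x * W x y))"
  proof (rule KL_eq, intro allI impI)
    fix z :: "'a \<times> 'b" assume zn: "q z \<noteq> 0"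
    obtain x y where z: "z = (x, y)" by (cases z)
    have qp: "q (x, y) > 0" using zn assms(1) unfolding z by (metis order.not_eq_order_implies_strict)
    have "q (x,y) \<le> xmarg q x" using assms xmarg_ge by metis
    then have "xmarg q x > 0" using qp by linarith
    moreover have "W x y \<noteq> 0" using assms(2) qp unfolding good_def by auto
    ultimately show "(case z of (x, y) \<Rightarrow> xmarg q x * W x y) \<noteq> 0" unfolding z by simp
  qed
  moreover have "KL (xmarg q) p = ereal (KLr (xmarg q) p)"
    using assms xmarg_zero unfolding good_def by (metis KL_eq)
  moreover have "exp_log_term q r = ereal (ELr q r)"
    using assms unfolding good_def by (intro ELT_eq) auto
  ultimately show ?thesis unfolding F_S3_def by simp
qed

lemma F_bad:
  assumes "\<alpha> > 1" "\<forall>z. 0 \<le> q z" "\<not> good W p q r"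
  shows "F_S3 \<alpha> W p q r = -\<infinity>"
proof -
  have a: "\<alpha> / (1 - \<alpha>) < 0" "1 / (1 - \<alpha>) < 0" using assms(1)
    by (auto simp: divide_neg_pos divide_pos_neg)
  define A where "A = ereal (\<alpha> / (1 - \<alpha>)) * KL q (\<lambda>(x, y). xmarg q x * W x y)"
  define B where "B = exp_log_term q r"
  define C where "C = ereal (1 / (1 - \<alpha>)) * KL (xmarg q) p"
  have nA: "A \<noteq> \<infinity>" unfolding A_def using a by (intro neg_mult_not_pinf KL_not_minf)
  have nB: "B \<noteq> \<infinity>" unfolding B_def by (rule ELT_not_pinf)
  have nC: "C \<noteq> \<infinity>" unfolding C_def using a by (intro neg_mult_not_pinf KL_not_minf)
  obtain x y where xy: "q (x, y) \<noteq> 0" "W x y = 0 \<or> r y x = 0 \<or> p x = 0"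
    using assms(3) unfolding good_def by blast
  have qX: "xmarg q x \<noteq> 0" using xmarg_ge[OF assms(2), of x y] assms(2) xy(1)
    by (metis order.antisym)
  have "A = -\<infinity> \<or> B = -\<infinity> \<or> C = -\<infinity>"
  proof -
    { assume "W x y = 0"
      then have "KL q (\<lambda>(x, y). xmarg q x * W x y) = \<infinity>" using xy by (intro KL_inf[of _ "(x,y)"]) auto
      then have "A = -\<infinity>" unfolding A_def using a by simp }
    moreover
    { assume "r y x = 0"
      then have "B = -\<infinity>" unfolding B_def using xy by (intro ELT_minf) }
    moreover
    { assume "p x = 0"
      then have "KL (xmarg q) p = \<infinity>" using qX by (intro KL_inf[of _ x]) auto
      then have "C = -\<infinity>" unfolding C_def using a by simp }
    ultimately show ?thesis using xy by blast
  qed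
  then have "A + B + C = -\<infinity>"
  proof (elim disjE)
    assume "A = -\<infinity>" then show ?thesis using nB nC by simp
  next
    assume "B = -\<infinity>" then show ?thesis using nA nC by (cases A) simp_all
  next
    assume "C = -\<infinity>" then have "A + B \<noteq> \<infinity>" using nA nB by (cases A; cases B) simp_all
    then show ?thesis using \<open>C = -\<infinity>\<close> by simp
  qed
  then show ?thesis unfolding F_S3_def A_def B_def C_def .
qed


lemma sum_pairs: "(\<Sum>z\<in>(UNIV::('x::finite\<times>'y::finite) set). f z) = (\<Sum>x\<in>UNIV. \<Sum>y\<in>UNIV. f (x,y))"
  by (metis UNIV_Times_UNIV sum.cartesian_product')

lemma ymarg_ge: "(\<forall>z. 0 \<le> q z) \<Longrightarrow> q (x, y) \<le> ymarg q y"
  unfolding ymarg_def by (rule member_le_sum[where f="\<lambda>x. q (x,y)", simplified]) auto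

lemma sum_ymarg: "(\<Sum>y\<in>UNIV. ymarg q y) = (\<Sum>z\<in>UNIV. q z)"
  unfolding ymarg_def sum_pairs[of q] by (rule sum.swap)

lemma sum_xmarg: "(\<Sum>x\<in>UNIV. xmarg q x) = (\<Sum>z\<in>UNIV. q z)"
  unfolding xmarg_def sum_pairs[of q] ..

lemma part1_real:
  assumes q: "distr q" and r: "rev_channel r"
    and rs: "\<forall>x y. 0 < ymarg q y \<longrightarrow> rstar y x = q (x, y) / ymarg q y"
    and g: "good W p q r"
  shows "ELr q r \<le> ELr q rstar"
proof -
  have q0: "\<forall>z. 0 \<le> q z" and q1: "(\<Sum>z\<in>UNIV. q z) = 1" using q unfolding distr_def by auto
  have r0: "\<And>y x. 0 \<le> r y x" and r1: "\<And>y. (\<Sum>x\<in>UNIV. r y x) = 1"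
    using r unfolding rev_channel_def distr_def by auto
  have pw: "(case z of (x, y) \<Rightarrow> if q (x, y) = 0 then 0 else q (x, y) * ln (r y x / xmarg q x))
     - (case z of (x, y) \<Rightarrow> if q (x, y) = 0 then 0 else q (x, y) * ln (rstar y x / xmarg q x))
     \<le> (case z of (x, y) \<Rightarrow> ymarg q y * r y x - q (x, y))" for z
  proof (cases z)
    case (Pair x y)
    show ?thesis
    proof (cases "q (x, y) = 0")
      case True
      have "0 \<le> ymarg q y" using ymarg_ge[OF q0, of x y] q0 by (metis order.trans)
      then show ?thesis using Pair True r0 by simp
    next
      case False
      have qp: "q (x, y) > 0" using False q0 by (metis order.not_eq_order_implies_strict)
      have qX: "xmarg q x > 0" using xmarg_ge[OF q0, of x y] qp by linarith
      have qY: "ymarg q y > 0" using ymarg_ge[OF q0, of x y] qp by linarith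
      have rp: "r y x > 0" using g False r0 unfolding good_def by (metis order.not_eq_order_implies_strict)
      have rsv: "rstar y x = q (x, y) / ymarg q y" using rs qY by blast
      have rsp: "rstar y x > 0" using rsv qp qY by simp
      have "q (x, y) * ln (r y x / xmarg q x) - q (x, y) * ln (rstar y x / xmarg q x)
          = q (x, y) * ln (r y x / rstar y x)"
        using qX rp rsp by (simp add: ln_div algebra_simps)
      also have "\<dots> \<le> q (x, y) * (r y x / rstar y x - 1)"
        using qp rp rsp by (intro mult_left_mono ln_le_minus_one) auto
      also have "\<dots> = ymarg q y * r y x - q (x, y)"
        using qp qY unfolding rsv by (simp add: field_simps)
      finally show ?thesis using Pair False by simp
    qed
  qed
  have "ELr q r - ELr q rstar \<le> (\<Sum>z\<in>UNIV. case z of (x, y) \<Rightarrow> ymarg q y * r y x - q (x, y))"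
    unfolding ELr_def sum_subtractf[symmetric] by (rule sum_mono) (rule pw)
  also have "\<dots> = (\<Sum>z\<in>UNIV. (case z of (x, y) \<Rightarrow> ymarg q y * r y x) - q z)"
    by (rule sum.cong) (auto split: prod.split)
  also have "\<dots> = (\<Sum>z\<in>UNIV. (case z of (x, y) \<Rightarrow> ymarg q y * r y x)) - (\<Sum>z\<in>UNIV. q z)"
    by (rule sum_subtractf)
  also have "\<dots> = (\<Sum>y\<in>UNIV. ymarg q y * (\<Sum>x\<in>UNIV. r y x)) - (\<Sum>z\<in>UNIV. q z)"
  proof -
    have "(\<Sum>z\<in>UNIV. (case z of (x, y) \<Rightarrow> ymarg q y * r y x)) = (\<Sum>x\<in>UNIV. \<Sum>y\<in>UNIV. ymarg q y * r y x)"
      unfolding sum_pairs[of "\<lambda>z. case z of (x, y) \<Rightarrow> ymarg q y * r y x"] by simp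
    also have "\<dots> = (\<Sum>y\<in>UNIV. \<Sum>x\<in>UNIV. ymarg q y * r y x)" by (rule sum.swap)
    also have "\<dots> = (\<Sum>y\<in>UNIV. ymarg q y * (\<Sum>x\<in>UNIV. r y x))" by (simp add: sum_distrib_left)
    finally show ?thesis by simp
  qed
  also have "\<dots> = 0" using r1 q1 sum_ymarg[of q] by simp
  finally show ?thesis by simp
qed

lemma part2_real:
  assumes q: "distr q" and p: "distr p" and g: "good W p q r"
  shows "0 \<le> KLr (xmarg q) p" and "KLr (xmarg q) (xmarg q) = 0"
proof -
  have q0: "\<forall>z. 0 \<le> q z" and q1: "(\<Sum>z\<in>UNIV. q z) = 1" using q unfolding distr_def by auto
  have p0: "\<And>x. 0 \<le> p x" and p1: "(\<Sum>x\<in>UNIV. p x) = 1" using p unfolding distr_def by auto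
  have X0: "0 \<le> xmarg q x" for x unfolding xmarg_def using q0 by (simp add: sum_nonneg)
  have pw: "xmarg q x - p x \<le> (if xmarg q x = 0 then 0 else xmarg q x * ln (xmarg q x / p x))" for x
  proof (cases "xmarg q x = 0")
    case True then show ?thesis using p0 by simp
  next
    case False
    have Xp: "xmarg q x > 0" using X0 False by (metis order.not_eq_order_implies_strict)
    have pp: "p x > 0" using g xmarg_zero[OF q0 False] p0 unfolding good_def
      by (metis order.not_eq_order_implies_strict)
    have "ln (p x / xmarg q x) \<le> p x / xmarg q x - 1" using pp Xp by (intro ln_le_minus_one) simp
    then have "xmarg q x * ln (p x / xmarg q x) \<le> xmarg q x * (p x / xmarg q x - 1)"
      using Xp by (intro mult_left_mono) auto
    moreover have "xmarg q x * (p x / xmarg q x - 1) = p x - xmarg q x" using Xp by (simp add: field_simps)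
    moreover have "ln (p x / xmarg q x) = ln (p x) - ln (xmarg q x)" "ln (xmarg q x / p x) = ln (xmarg q x) - ln (p x)"
      using Xp pp by (simp_all add: ln_div)
    ultimately show ?thesis using False by (simp add: right_diff_distrib)
  qed
  have "0 = (\<Sum>x\<in>UNIV. xmarg q x - p x)" using q1 p1 sum_xmarg[of q] by (simp add: sum_subtractf)
  also have "\<dots> \<le> KLr (xmarg q) p" unfolding KLr_def by (rule sum_mono) (rule pw)
  finally show "0 \<le> KLr (xmarg q) p" .
  show "KLr (xmarg q) (xmarg q) = 0" unfolding KLr_def by (intro sum.neutral) simp
qed


lemma alg_core:
  fixes a c1 c2 q lq lX lW lr lp :: real
  assumes h1: "a * c1 = a + 1" and h2: "a * c2 = -1"
  shows "a * (q * (lq - lX - lW)) + q * (lr - lX) + (a + 1) * (q * (lX - lp))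
       = a * (q * (lq - (c1 * lp + lW + c2 * lr)))"
proof -
  have "a * (q * (lq - (c1 * lp + lW + c2 * lr))) = a*q*lq - (a*c1)*q*lp - a*q*lW - (a*c2)*q*lr"
    by algebra
  also have "\<dots> = a*q*lq - (a+1)*q*lp - a*q*lW + q*lr" unfolding h1 h2 by algebra
  also have "\<dots> = a * (q * (lq - lX - lW)) + q * (lr - lX) + (a + 1) * (q * (lX - lp))"
    by algebra
  finally show ?thesis by simp
qed

lemma alg_id:
  fixes \<alpha> q lq lX lW lr lp :: real
  assumes "\<alpha> > 1"
  shows "\<alpha> / (1 - \<alpha>) * (q * (lq - lX - lW)) + q * (lr - lX) + 1 / (1 - \<alpha>) * (q * (lX - lp))
       = \<alpha> / (1 - \<alpha>) * (q * (lq - (1 / \<alpha> * lp + lW + (1 - 1 / \<alpha>) * lr)))"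
proof -
  define a where "a = \<alpha> / (1 - \<alpha>)"
  define c1 where "c1 = 1 / \<alpha>"
  define c2 where "c2 = 1 - c1"
  have nz: "1 - \<alpha> \<noteq> 0" "\<alpha> \<noteq> 0" using assms by auto
  have h1: "a * c1 = a + 1" unfolding a_def c1_def using nz by (simp add: field_simps)
  have h2: "a * c2 = -1" unfolding a_def c2_def c1_def using nz by (simp add: field_simps)
  have hb: "1 / (1 - \<alpha>) = a + 1" unfolding a_def using nz by (simp add: field_simps)
  show ?thesis unfolding hb a_def[symmetric] c1_def[symmetric] c2_def[symmetric]
    by (rule alg_core[OF h1 h2])
qed

lemma conv:
  fixes q :: "'x::finite \<times> 'y::finite \<Rightarrow> real"
  assumes a: "\<alpha> > 1" and q0: "\<forall>z. 0 \<le> q z" and W0: "\<forall>x y. 0 \<le> W x y"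
    and p0: "\<forall>x. 0 \<le> p x" and r0: "\<forall>y x. 0 \<le> r y x" and g: "good W p q r"
  shows "\<alpha> / (1 - \<alpha>) * KLr q (\<lambda>(x, y). xmarg q x * W x y) + ELr q r + 1 / (1 - \<alpha>) * KLr (xmarg q) p
   = (\<Sum>z\<in>UNIV. case z of (x, y) \<Rightarrow> if q (x, y) = 0 then 0 else
        \<alpha> / (1 - \<alpha>) * (q (x, y) * (ln (q (x, y)) - ln (p x powr (1 / \<alpha>) * W x y * r y x powr (1 - 1 / \<alpha>)))))"
proof -
  have K2: "KLr (xmarg q) p = (\<Sum>z\<in>UNIV. case z of (x, y) \<Rightarrow>
      if q (x, y) = 0 then 0 else q (x, y) * ln (xmarg q x / p x))"
  proof -
    have "KLr (xmarg q) p = (\<Sum>x\<in>UNIV. xmarg q x * ln (xmarg q x / p x))"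
      unfolding KLr_def by (rule sum.cong) auto
    also have "\<dots> = (\<Sum>x\<in>UNIV. \<Sum>y\<in>UNIV. q (x, y) * ln (xmarg q x / p x))"
      by (simp add: xmarg_def sum_distrib_right)
    also have "\<dots> = (\<Sum>x\<in>UNIV. \<Sum>y\<in>UNIV. if q (x, y) = 0 then 0 else q (x, y) * ln (xmarg q x / p x))"
      by (intro sum.cong) auto
    also have "\<dots> = (\<Sum>z\<in>UNIV. case z of (x, y) \<Rightarrow>
      if q (x, y) = 0 then 0 else q (x, y) * ln (xmarg q x / p x))"
      by (subst sum_pairs) simp
    finally show ?thesis .
  qed
  have K1: "KLr q (\<lambda>(x, y). xmarg q x * W x y) = (\<Sum>z\<in>UNIV. case z of (x, y) \<Rightarrow>
      if q (x, y) = 0 then 0 else q (x, y) * ln (q (x, y) / (xmarg q x * W x y)))"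
    unfolding KLr_def by (rule sum.cong) (auto split: prod.split)
  show ?thesis
    unfolding K1 K2 ELr_def sum_distrib_left sum.distrib[symmetric]
  proof (rule sum.cong[OF refl], goal_cases)
    case (1 z)
    obtain x y where z: "z = (x, y)" by (cases z)
    show ?case
    proof (cases "q (x, y) = 0")
      case True then show ?thesis unfolding z by simp
    next
    case False
    then have qn: "q (x, y) \<noteq> 0" .
    have qp: "q (x, y) > 0" using qn q0 by (metis order.not_eq_order_implies_strict)
    have qX: "xmarg q x > 0" using xmarg_ge[OF q0, of x y] qp by linarith
    have Wp: "W x y > 0" and rp: "r y x > 0" and pp: "p x > 0"
      using g qn W0 r0 p0 unfolding good_def by (metis order.not_eq_order_implies_strict)+
    have l1: "ln (q (x, y) / (xmarg q x * W x y)) = ln (q (x, y)) - ln (xmarg q x) - ln (W x y)"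
      using qp qX Wp by (simp add: ln_div ln_mult)
    have l2: "ln (r y x / xmarg q x) = ln (r y x) - ln (xmarg q x)" using rp qX by (simp add: ln_div)
    have l3: "ln (xmarg q x / p x) = ln (xmarg q x) - ln (p x)" using pp qX by (simp add: ln_div)
    have l4: "ln (p x powr (1 / \<alpha>) * W x y * r y x powr (1 - 1 / \<alpha>))
        = 1 / \<alpha> * ln (p x) + ln (W x y) + (1 - 1 / \<alpha>) * ln (r y x)"
      using pp Wp rp by (simp add: ln_mult)
    have "\<alpha> / (1 - \<alpha>) * (q (x, y) * ln (q (x, y) / (xmarg q x * W x y))) +
         q (x, y) * ln (r y x / xmarg q x) + 1 / (1 - \<alpha>) * (q (x, y) * ln (xmarg q x / p x)) =
         \<alpha> / (1 - \<alpha>) * (q (x, y) * (ln (q (x, y)) - ln (p x powr (1 / \<alpha>) * W x y * r y x powr (1 - 1 / \<alpha>))))"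
      unfolding l1 l2 l3 l4 by (rule alg_id[OF a])
    then show ?thesis unfolding z prod.case if_not_P[OF qn] .
    qed
  qed
qed


lemma part3:
  fixes W :: "'x::finite \<Rightarrow> 'y::finite \<Rightarrow> real"
  assumes a: "1 < \<alpha>" and W: "channel W" and p: "distr p" and q: "distr q" and r: "rev_channel r"
    and Z: "0 < Z3 \<alpha> W p r"
  shows "distr (q_star \<alpha> W p r) \<and> F_S3 \<alpha> W p q r \<le> F_S3 \<alpha> W p (q_star \<alpha> W p r) r"
proof -
  define g :: "'x \<times> 'y \<Rightarrow> real" where
    "g = (\<lambda>z. case z of (x, y) \<Rightarrow> p x powr (1 / \<alpha>) * W x y * r y x powr (1 - 1 / \<alpha>))"
  define Zv where "Zv = Z3 \<alpha> W p r"
  define c where "c = \<alpha> / (1 - \<alpha>)"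
  have c0: "c < 0" unfolding c_def using a by (simp add: divide_pos_neg)
  have q0: "\<forall>z. 0 \<le> q z" and q1: "(\<Sum>z\<in>UNIV. q z) = 1" using q unfolding distr_def by auto
  have p0: "\<forall>x. 0 \<le> p x" using p unfolding distr_def by auto
  have W0: "\<forall>x y. 0 \<le> W x y" using W unfolding channel_def distr_def by auto
  have r0: "\<forall>y x. 0 \<le> r y x" using r unfolding rev_channel_def distr_def by auto
  have g0: "0 \<le> g z" for z unfolding g_def using p0 W0 r0 by (auto split: prod.split)
  have Zg: "Zv = (\<Sum>z\<in>UNIV. g z)" unfolding Zv_def Z3_def g_def by (subst sum_pairs) simp
  have Zp: "Zv > 0" using Z unfolding Zv_def .
  have qs: "q_star \<alpha> W p r = (\<lambda>z. g z / Zv)"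
    unfolding q_star_def g_def Zv_def by (auto simp: fun_eq_iff)
  have gpos: "g (x, y) \<noteq> 0 \<Longrightarrow> W x y \<noteq> 0 \<and> r y x \<noteq> 0 \<and> p x \<noteq> 0" for x y
    unfolding g_def by auto
  have gp: "g z \<noteq> 0 \<Longrightarrow> g z > 0" for z using g0[of z] by linarith
  have dq: "distr (q_star \<alpha> W p r)"
    unfolding distr_def qs using g0 Zp Zg by (simp add: sum_divide_distrib[symmetric])
  have qs0: "\<forall>z. 0 \<le> q_star \<alpha> W p r z" using dq unfolding distr_def by auto
  have gs: "good W p (q_star \<alpha> W p r) r"
    unfolding good_def qs using gpos Zp by auto
  have "F_S3 \<alpha> W p (q_star \<alpha> W p r) r = ereal (\<Sum>z\<in>UNIV. case z of (x, y) \<Rightarrow>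
     if q_star \<alpha> W p r (x, y) = 0 then 0 else c * (q_star \<alpha> W p r (x, y) * (ln (q_star \<alpha> W p r (x, y)) - ln (g (x, y)))))"
    unfolding F_good[OF qs0 gs] conv[OF a qs0 W0 p0 r0 gs] c_def
    by (intro arg_cong[where f=ereal] sum.cong refl) (auto simp: g_def split: prod.split)
  also have "\<dots> = ereal (\<Sum>z\<in>UNIV. c * (- ln Zv) * (g z / Zv))"
  proof (intro arg_cong[where f=ereal] sum.cong refl)
    fix z :: "'x \<times> 'y"
    obtain x y where z: "z = (x, y)" by (cases z)
    show "(case z of (x, y) \<Rightarrow>
     if q_star \<alpha> W p r (x, y) = 0 then 0 else c * (q_star \<alpha> W p r (x, y) * (ln (q_star \<alpha> W p r (x, y)) - ln (g (x, y)))))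
      = c * (- ln Zv) * (g z / Zv)"
    proof (cases "g z = 0")
      case True then show ?thesis unfolding z qs by simp
    next
      case False
      then have "g z > 0" by (rule gp)
      then have e: "ln (g (x, y) / Zv) - ln (g (x, y)) = - ln Zv" using Zp unfolding z by (simp add: ln_div)
      have ne: "\<not> (g (x, y) / Zv = 0)" using False Zp unfolding z by simp
      show ?thesis unfolding z qs prod.case if_not_P[OF ne] e by simp
    qed
  qed
  also have "\<dots> = ereal (c * (- ln Zv) * (\<Sum>z\<in>UNIV. g z / Zv))" by (simp only: sum_distrib_left)
  also have "(\<Sum>z\<in>UNIV. g z / Zv) = 1" using dq unfolding distr_def qs by simp
  also have "ereal (c * (- ln Zv) * 1) = ereal (c * (- ln Zv))" by simp
  finally have Fs: "F_S3 \<alpha> W p (q_star \<alpha> W p r) r = ereal (c * (- ln Zv))" .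
  have "F_S3 \<alpha> W p q r \<le> ereal (c * (- ln Zv))"
  proof (cases "good W p q r")
    case False
    then show ?thesis using F_bad[OF a q0] by simp
  next
    case True
    define T where "T = (\<Sum>z\<in>UNIV. if q z = 0 then 0 else q z * (ln (q z) - ln (g z)))"
    have "F_S3 \<alpha> W p q r = ereal (\<Sum>z\<in>UNIV. case z of (x, y) \<Rightarrow>
       if q (x, y) = 0 then 0 else c * (q (x, y) * (ln (q (x, y)) - ln (g (x, y)))))"
      unfolding F_good[OF q0 True] conv[OF a q0 W0 p0 r0 True] c_def
      by (intro arg_cong[where f=ereal] sum.cong refl) (auto simp: g_def split: prod.split)
    also have "\<dots> = ereal (c * T)" unfolding T_def sum_distrib_left
      by (intro arg_cong[where f=ereal] sum.cong refl) (auto split: prod.split)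
    finally have FT: "F_S3 \<alpha> W p q r = ereal (c * T)" .
    have pw: "(if q z = 0 then 0 else q z * (ln (g z) - ln (q z) - ln Zv)) \<le> g z / Zv - q z" for z
    proof (cases "q z = 0")
      case True then show ?thesis using g0[of z] Zp by simp
    next
      case False
      obtain x y where z: "z = (x, y)" by (cases z)
      have qp: "q z > 0" using False q0 by (metis order.not_eq_order_implies_strict)
      have "g z \<noteq> 0" using True False unfolding good_def g_def z by auto
      then have gz: "g z > 0" by (rule gp)
      have "ln (g z / (Zv * q z)) \<le> g z / (Zv * q z) - 1" using gz Zp qp by (intro ln_le_minus_one) simp
      then have "q z * ln (g z / (Zv * q z)) \<le> q z * (g z / (Zv * q z) - 1)"
        using qp by (intro mult_left_mono) auto
      moreover have "ln (g z / (Zv * q z)) = ln (g z) - ln (q z) - ln Zv"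
        using gz Zp qp by (simp add: ln_div ln_mult)
      moreover have "q z * (g z / (Zv * q z) - 1) = g z / Zv - q z" using qp Zp by (simp add: field_simps)
      ultimately show ?thesis using False by simp
    qed
    have eq: "(if q z = 0 then 0 else q z * (ln (g z) - ln (q z) - ln Zv))
        = - (if q z = 0 then 0 else q z * (ln (q z) - ln (g z))) - ln Zv * q z" for z
      by (simp add: algebra_simps)
    have s1: "(\<Sum>z\<in>UNIV. (if q z = 0 then 0 else q z * (ln (g z) - ln (q z) - ln Zv)))
       \<le> (\<Sum>z\<in>UNIV. g z / Zv - q z)" by (rule sum_mono) (rule pw)
    have s2: "(\<Sum>z\<in>UNIV. (if q z = 0 then 0 else q z * (ln (g z) - ln (q z) - ln Zv)))
       = - T - ln Zv * (\<Sum>z\<in>UNIV. q z)"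
      unfolding eq T_def by (simp add: sum_subtractf sum_negf sum_distrib_left)
    have s3: "(\<Sum>z\<in>UNIV. g z / Zv - q z) = 0"
      using q1 Zg Zp by (simp add: sum_subtractf sum_divide_distrib[symmetric])
    have "- T - ln Zv \<le> 0" using s1 s2 s3 q1 by simp
    then have "- ln Zv \<le> T" by simp
    then have "c * T \<le> c * (- ln Zv)" using c0 by (intro mult_left_mono_neg) auto
    then show ?thesis unfolding FT by simp
  qed
  then show ?thesis using dq Fs by simp
qed

theorem proposition5:
  fixes \<alpha> :: real
    and W :: "'x::finite \<Rightarrow> 'y::finite \<Rightarrow> real"
  assumes "1 < \<alpha>"
    and "channel W"
  shows
    "(\<forall>p q r rstar. distr p \<longrightarrow> distr q \<longrightarrow> rev_channel r \<longrightarrow> rev_channel rstar \<longrightarrow>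
        (\<forall>x y. 0 < ymarg q y \<longrightarrow> rstar y x = q (x, y) / ymarg q y) \<longrightarrow>
        F_S3 \<alpha> W p q r \<le> F_S3 \<alpha> W p q rstar)
   \<and> (\<forall>p q r. distr p \<longrightarrow> distr q \<longrightarrow> rev_channel r \<longrightarrow>
        distr (xmarg q) \<and> F_S3 \<alpha> W p q r \<le> F_S3 \<alpha> W (xmarg q) q r)
   \<and> (\<forall>p q r. distr p \<longrightarrow> distr q \<longrightarrow> rev_channel r \<longrightarrow> 0 < Z3 \<alpha> W p r \<longrightarrow>
        distr (q_star \<alpha> W p r) \<and> F_S3 \<alpha> W p q r \<le> F_S3 \<alpha> W p (q_star \<alpha> W p r) r)"
proof (intro conjI allI impI)
  fix p :: "'x \<Rightarrow> real" and q :: "'x \<times> 'y \<Rightarrow> real" and r rstar :: "'y \<Rightarrow> 'x \<Rightarrow> real"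
  assume p: "distr p" and q: "distr q" and r: "rev_channel r" and rs': "rev_channel rstar"
    and rs: "\<forall>x y. 0 < ymarg q y \<longrightarrow> rstar y x = q (x, y) / ymarg q y"
  have q0: "\<forall>z. 0 \<le> q z" using q unfolding distr_def by auto
  show "F_S3 \<alpha> W p q r \<le> F_S3 \<alpha> W p q rstar"
  proof (cases "good W p q r")
    case False then show ?thesis using F_bad[OF assms(1) q0 False] by simp
  next
    case True
    have gs: "good W p q rstar" unfolding good_def
    proof (intro allI impI)
      fix x y assume qn: "q (x, y) \<noteq> 0"
      have qp: "q (x, y) > 0" using qn q0 by (metis order.not_eq_order_implies_strict)
      have qY: "ymarg q y > 0" using ymarg_ge[OF q0, of x y] qp by linarith
      have "W x y \<noteq> 0 \<and> p x \<noteq> 0" using True qn unfolding good_def by blast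
      moreover have "rstar y x = q (x, y) / ymarg q y" using rs qY by blast
      moreover have "q (x, y) / ymarg q y > 0" using qp qY by simp
      ultimately have "W x y \<noteq> 0 \<and> p x \<noteq> 0" "rstar y x > 0" by simp_all
      then show "W x y \<noteq> 0 \<and> rstar y x \<noteq> 0 \<and> p x \<noteq> 0" by simp
    qed
    show ?thesis unfolding F_good[OF q0 True] F_good[OF q0 gs]
      using part1_real[OF q r rs True] by (simp only: ereal_less_eq; linarith)
  qed
next
  fix p :: "'x \<Rightarrow> real" and q :: "'x \<times> 'y \<Rightarrow> real" and r :: "'y \<Rightarrow> 'x \<Rightarrow> real"
  assume p: "distr p" and q: "distr q" and r: "rev_channel r"
  have q0: "\<forall>z. 0 \<le> q z" and q1: "(\<Sum>z\<in>UNIV. q z) = 1" using q unfolding distr_def by auto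
  have "\<forall>x. 0 \<le> xmarg q x" unfolding xmarg_def using q0 by (simp add: sum_nonneg)
  then show "distr (xmarg q)" unfolding distr_def using q1 sum_xmarg[of q] by simp
next
  fix p :: "'x \<Rightarrow> real" and q :: "'x \<times> 'y \<Rightarrow> real" and r :: "'y \<Rightarrow> 'x \<Rightarrow> real"
  assume p: "distr p" and q: "distr q" and r: "rev_channel r"
  have q0: "\<forall>z. 0 \<le> q z" using q unfolding distr_def by auto
  have b0: "1 / (1 - \<alpha>) < 0" using assms(1) by simp
  show "F_S3 \<alpha> W p q r \<le> F_S3 \<alpha> W (xmarg q) q r"
  proof (cases "good W p q r")
    case False then show ?thesis using F_bad[OF assms(1) q0 False] by simp
  next
    case True
    have gs: "good W (xmarg q) q r" unfolding good_def
    proof (intro allI impI)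
      fix x y assume qn: "q (x, y) \<noteq> 0"
      have qp: "q (x, y) > 0" using qn q0 by (metis order.not_eq_order_implies_strict)
      have "xmarg q x > 0" using xmarg_ge[OF q0, of x y] qp by linarith
      moreover have "W x y \<noteq> 0 \<and> r y x \<noteq> 0" using True qn unfolding good_def by blast
      ultimately show "W x y \<noteq> 0 \<and> r y x \<noteq> 0 \<and> xmarg q x \<noteq> 0" by simp
    qed
    have "1 / (1 - \<alpha>) * KLr (xmarg q) p \<le> 0"
      using part2_real(1)[OF q p True] b0 by (intro mult_nonpos_nonneg) auto
    then show ?thesis unfolding F_good[OF q0 True] F_good[OF q0 gs] part2_real(2)[OF q p True]
      by (simp only: ereal_less_eq; linarith)
  qed
next
  fix p :: "'x \<Rightarrow> real" and q :: "'x \<times> 'y \<Rightarrow> real" and r :: "'y \<Rightarrow> 'x \<Rightarrow> real"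
  assume "distr p" "distr q" "rev_channel r" "0 < Z3 \<alpha> W p r"
  then show "distr (q_star \<alpha> W p r)" "F_S3 \<alpha> W p q r \<le> F_S3 \<alpha> W p (q_star \<alpha> W p r) r"
    using part3[OF assms(1,2)] by blast+
qed

end
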